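(* Let $n\ge 3$ and let $L\subseteq\Sigma^*$ be a finite or cofinite regular language with state complexity $n$ such that $\sigma(L)=(n-1)!$. Then $|\Sigma|\ge (n-1)!-(n-2)!$. Moreover, this bound is tight: for every $n\ge 3$ there exists a finite or cofinite language over an alphabet of size exactly $(n-1)!-(n-2)!$ with state complexity $n$ and syntactic complexity $(n-1)!$.
   Context: $\Sigma$ is a finite non-empty alphabet. A language is cofinite if its complement is finite. The state complexity of a regular language $L$ is the number of states of its minimal deterministic finite automaton (DFA). The syntactic congruence of $L$ is $x\approx_L y$ iff for all $u,v\in\Sigma^*$, $uxv\in L\Leftrightarrow uyv\in L$; the syntactic semigroup is $\Sigma^+/\approx_L$, and the syntactic complexity $\sigma(L)$ is its cardinality (equivalently, the number of distinct transformations of the states of the minimal DFA of $L$ induced by non-empty words). *)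

theory Defs
  imports Main
begin

text \<open>Complete DFAs over an alphabet Alph (a finite set of letters), with states
  drawn from nat (any finite state set can be relabelled).\<close>

definition dfa :: "'a set \<Rightarrow> nat set \<Rightarrow> (nat \<Rightarrow> 'a \<Rightarrow> nat) \<Rightarrow> nat \<Rightarrow> nat set \<Rightarrow> bool" where
  "dfa Alph Q delta q0 F \<longleftrightarrow> finite Q \<and> q0 \<in> Q \<and> F \<subseteq> Q \<and>
     (\<forall>q\<in>Q. \<forall>a\<in>Alph. delta q a \<in> Q)"

definition dfa_lang :: "'a set \<Rightarrow> (nat \<Rightarrow> 'a \<Rightarrow> nat) \<Rightarrow> nat \<Rightarrow> nat set \<Rightarrow> 'a list set" where
  "dfa_lang Alph delta q0 F = {w \<in> lists Alph. foldl delta q0 w \<in> F}"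

definition regular :: "'a set \<Rightarrow> 'a list set \<Rightarrow> bool" where
  "regular Alph L \<longleftrightarrow> (\<exists>Q delta q0 F. dfa Alph Q delta q0 F \<and> dfa_lang Alph delta q0 F = L)"

definition state_complexity :: "'a set \<Rightarrow> 'a list set \<Rightarrow> nat" where
  "state_complexity Alph L = (LEAST n. \<exists>Q delta q0 F. dfa Alph Q delta q0 F \<and> card Q = n
       \<and> dfa_lang Alph delta q0 F = L)"

definition syn_cong :: "'a set \<Rightarrow> 'a list set \<Rightarrow> 'a list \<Rightarrow> 'a list \<Rightarrow> bool" where
  "syn_cong Alph L x y \<longleftrightarrow> (\<forall>u\<in>lists Alph. \<forall>v\<in>lists Alph. u @ x @ v \<in> L \<longleftrightarrow> u @ y @ v \<in> L)"

definition nonempty_words :: "'a set \<Rightarrow> 'a list set" where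
  "nonempty_words Alph = lists Alph - {[]}"

definition syntactic_complexity :: "'a set \<Rightarrow> 'a list set \<Rightarrow> nat" where
  "syntactic_complexity Alph L =
     card (nonempty_words Alph //
       {(x, y). x \<in> nonempty_words Alph \<and> y \<in> nonempty_words Alph \<and> syn_cong Alph L x y})"

definition finite_or_cofinite :: "'a set \<Rightarrow> 'a list set \<Rightarrow> bool" where
  "finite_or_cofinite Alph L \<longleftrightarrow> finite L \<or> finite (lists Alph - L)"

end

theory Submission imports Defs "HOL-Library.FuncSet" begin


definition Tn :: "nat \<Rightarrow> (nat \<Rightarrow> nat) set" where
  "Tn n = PiE {0..<n} (\<lambda>i. if i = 0 then {0} else {0..<i})"
definition Dn :: "nat \<Rightarrow> (nat \<Rightarrow> nat) set" where
  "Dn n = PiE {0..<n} (\<lambda>i. if i < 2 then {0} else {0..<i-1})"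

lemma prod_fact1: "(\<Prod>i\<in>{0..<n}. (if i = 0 then 1 else i)) = fact (n - 1)"
proof (induction n)
  case 0 then show ?case by simp
next
  case (Suc n) then show ?case
    by (cases n) (auto simp: fact_reduce)
qed

lemma prod_fact2: "(\<Prod>i\<in>{0..<n}. (if i < 2 then 1 else i - 1)) = fact (n - 2)"
proof (induction n)
  case 0 then show ?case by simp
next
  case (Suc n) then show ?case
  proof (cases "n < 2")
    case False
    then have "fact (n - 1) = fact (n - 2) * (n - 1)"
      using fact_reduce[of "n - 1", where 'a=nat] by (simp add: numeral_2_eq_2 mult.commute)
    with Suc False show ?thesis by simp
  qed auto
qed

lemma card_Tn: "card (Tn n) = fact (n - 1)"
proof -
  have "card (Tn n) = (\<Prod>i\<in>{0..<n}. card (if i = 0 then {0} else {0..<i}))"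
    unfolding Tn_def by (rule card_PiE) simp
  also have "\<dots> = (\<Prod>i\<in>{0..<n}. (if i = 0 then 1 else i))"
    by (rule prod.cong) auto
  finally show ?thesis using prod_fact1 by simp
qed

lemma card_Dn: "card (Dn n) = fact (n - 2)"
proof -
  have "card (Dn n) = (\<Prod>i\<in>{0..<n}. card (if i < 2 then {0} else {0..<i-1}))"
    unfolding Dn_def by (rule card_PiE) simp
  also have "\<dots> = (\<Prod>i\<in>{0..<n}. (if i < 2 then 1 else i - 1))"
    by (rule prod.cong) auto
  finally show ?thesis using prod_fact2 by simp
qed

lemma finite_Tn: "finite (Tn n)"
  unfolding Tn_def by (rule finite_PiE) auto

lemma Dn_sub: "Dn n \<subseteq> Tn n"
  unfolding Dn_def Tn_def by (rule PiE_mono) auto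

lemma TnD: "t \<in> Tn n \<Longrightarrow> i < n \<Longrightarrow> t i < n \<and> (i = 0 \<longrightarrow> t i = 0) \<and> (i \<noteq> 0 \<longrightarrow> t i < i)"
  unfolding Tn_def using PiE_mem[of t "{0..<n}" "\<lambda>i. if i = 0 then {0} else {0..<i}" i] by (auto split: if_splits)

lemma TnI: "(\<And>i. i < n \<Longrightarrow> t i < n \<and> (i = 0 \<longrightarrow> t i = 0) \<and> (i \<noteq> 0 \<longrightarrow> t i < i)) \<Longrightarrow>
   restrict t {0..<n} \<in> Tn n"
  unfolding Tn_def by (auto simp: restrict_PiE_iff)

lemma DnD: "t \<in> Dn n \<Longrightarrow> i < n \<Longrightarrow> 2 \<le> i \<Longrightarrow> t i < i - 1"
  unfolding Dn_def using PiE_mem[of t "{0..<n}" "\<lambda>i. if i < 2 then {0} else {0..<i-1}" i] by (auto split: if_splits)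

lemma DnD0: "t \<in> Dn n \<Longrightarrow> i < n \<Longrightarrow> i < 2 \<Longrightarrow> t i = 0"
  unfolding Dn_def using PiE_mem[of t "{0..<n}" "\<lambda>i. if i < 2 then {0} else {0..<i-1}" i] by (auto split: if_splits)

lemma Tn_arb: "t \<in> Tn n \<Longrightarrow> \<not> i < n \<Longrightarrow> t i = undefined"
  unfolding Tn_def using PiE_arb[of t "{0..<n}" _ i] by simp

lemma compose_Dn:
  assumes u: "u \<in> Tn n" and v: "v \<in> Tn n"
  shows "compose {0..<n} v u \<in> Dn n"
proof -
  have "\<forall>i\<in>{0..<n}. v (u i) \<in> (if i < 2 then {0} else {0..<i-1})"
  proof
    fix i assume i: "i \<in> {0..<n}"
    have ui: "u i < n" "i = 0 \<longrightarrow> u i = 0" "i \<noteq> 0 \<longrightarrow> u i < i" using TnD[OF u, of i] i by auto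
    have vi: "v (u i) < n" "u i = 0 \<longrightarrow> v (u i) = 0" "u i \<noteq> 0 \<longrightarrow> v (u i) < u i"
      using TnD[OF v, of "u i"] ui by auto
    show "v (u i) \<in> (if i < 2 then {0} else {0..<i-1})"
      using ui vi by (cases "u i = 0") auto
  qed
  then show ?thesis unfolding Dn_def compose_def by (simp add: restrict_PiE_iff)
qed



definition deriv :: "'a list \<Rightarrow> 'a list set \<Rightarrow> 'a list set" where
  "deriv w X = {v. w @ v \<in> X}"

definition Qs :: "'a set \<Rightarrow> 'a list set \<Rightarrow> 'a list set set" where
  "Qs Alph L = (\<lambda>u. deriv u L) ` lists Alph"

lemma deriv_append: "deriv (u @ w) X = deriv w (deriv u X)"
  by (simp add: deriv_def)

lemma deriv_Nil[simp]: "deriv [] X = X" by (simp add: deriv_def)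

lemma deriv_empty[simp]: "deriv w {} = {}" by (simp add: deriv_def)

lemma deriv_Qs: "X \<in> Qs Alph L \<Longrightarrow> w \<in> lists Alph \<Longrightarrow> deriv w X \<in> Qs Alph L"
proof -
  assume X: "X \<in> Qs Alph L" and w: "w \<in> lists Alph"
  then obtain u where u: "u \<in> lists Alph" "X = deriv u L" unfolding Qs_def by auto
  then have "deriv w X = deriv (u @ w) L" by (simp add: deriv_append)
  moreover have "u @ w \<in> lists Alph" using u w by simp
  ultimately show ?thesis unfolding Qs_def by blast
qed

lemma card_quotient_kernel:
  "card (A // {(x,y). x\<in>A \<and> y\<in>A \<and> f x = f y}) = card (f ` A)"
proof -
  let ?R = "{(x,y). x\<in>A \<and> y\<in>A \<and> f x = f y}"
  have "A // ?R = (\<lambda>c. {y\<in>A. f y = c}) ` (f ` A)"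
  proof -
    have "\<And>x. x \<in> A \<Longrightarrow> ?R `` {x} = {y\<in>A. f y = f x}" by auto
    then have "A // ?R = (\<lambda>x. {y\<in>A. f y = f x}) ` A"
      unfolding quotient_def by auto
    then show ?thesis by (simp add: image_image)
  qed
  moreover have "inj_on (\<lambda>c. {y\<in>A. f y = c}) (f ` A)"
    by (rule inj_onI) auto
  ultimately show ?thesis by (simp add: card_image)
qed

lemma card_image_kernel:
  assumes "\<And>x y. x\<in>A \<Longrightarrow> y\<in>A \<Longrightarrow> f x = f y \<longleftrightarrow> g x = g y"
  shows "card (f ` A) = card (g ` A)"
proof -
  have "{(x,y). x\<in>A \<and> y\<in>A \<and> f x = f y} = {(x,y). x\<in>A \<and> y\<in>A \<and> g x = g y}"
    using assms by auto
  then show ?thesis using card_quotient_kernel[of A f] card_quotient_kernel[of A g] by simp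
qed

lemma deriv_sub_lists: "L \<subseteq> lists Alph \<Longrightarrow> u \<in> lists Alph \<Longrightarrow> deriv u L \<subseteq> lists Alph"
  unfolding deriv_def by auto

lemma syn_cong_iff:
  assumes L: "L \<subseteq> lists Alph" and x: "x \<in> lists Alph" and y: "y \<in> lists Alph"
  shows "syn_cong Alph L x y \<longleftrightarrow> restrict (deriv x) (Qs Alph L) = restrict (deriv y) (Qs Alph L)"
proof -
  have "syn_cong Alph L x y \<longleftrightarrow> (\<forall>u\<in>lists Alph. deriv x (deriv u L) = deriv y (deriv u L))"
  proof
    assume s: "syn_cong Alph L x y"
    show "\<forall>u\<in>lists Alph. deriv x (deriv u L) = deriv y (deriv u L)"
    proof
      fix u assume u: "u \<in> lists Alph"
      show "deriv x (deriv u L) = deriv y (deriv u L)"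
      proof (rule set_eqI)
        fix v
        show "v \<in> deriv x (deriv u L) \<longleftrightarrow> v \<in> deriv y (deriv u L)"
        proof (cases "v \<in> lists Alph")
          case True then show ?thesis using s u unfolding syn_cong_def deriv_def by auto
        next
          case False then show ?thesis using L unfolding deriv_def by auto
        qed
      qed
    qed
  next
    assume h: "\<forall>u\<in>lists Alph. deriv x (deriv u L) = deriv y (deriv u L)"
    show "syn_cong Alph L x y" unfolding syn_cong_def
    proof (intro ballI)
      fix u v assume u: "u \<in> lists Alph" and v: "v \<in> lists Alph"
      have "v \<in> deriv x (deriv u L) \<longleftrightarrow> v \<in> deriv y (deriv u L)" using h u by simp
      then show "u @ x @ v \<in> L \<longleftrightarrow> u @ y @ v \<in> L" unfolding deriv_def by simp
    qed
  qed
  also have "\<dots> \<longleftrightarrow> restrict (deriv x) (Qs Alph L) = restrict (deriv y) (Qs Alph L)"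
  proof
    assume h: "\<forall>u\<in>lists Alph. deriv x (deriv u L) = deriv y (deriv u L)"
    show "restrict (deriv x) (Qs Alph L) = restrict (deriv y) (Qs Alph L)"
    proof (rule restrict_ext)
      fix X assume "X \<in> Qs Alph L"
      then obtain u where "u \<in> lists Alph" "X = deriv u L" unfolding Qs_def by auto
      then show "deriv x X = deriv y X" using h by simp
    qed
  next
    assume h: "restrict (deriv x) (Qs Alph L) = restrict (deriv y) (Qs Alph L)"
    show "\<forall>u\<in>lists Alph. deriv x (deriv u L) = deriv y (deriv u L)"
    proof
      fix u assume u: "u \<in> lists Alph"
      then have "deriv u L \<in> Qs Alph L" unfolding Qs_def by auto
      then show "deriv x (deriv u L) = deriv y (deriv u L)"
        using fun_cong[OF h, of "deriv u L"] by simp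
    qed
  qed
  finally show ?thesis .
qed

lemma syntactic_complexity_eq:
  assumes L: "L \<subseteq> lists Alph"
  shows "syntactic_complexity Alph L = card ((\<lambda>w. restrict (deriv w) (Qs Alph L)) ` nonempty_words Alph)"
proof -
  have "{(x, y). x \<in> nonempty_words Alph \<and> y \<in> nonempty_words Alph \<and> syn_cong Alph L x y}
      = {(x, y). x \<in> nonempty_words Alph \<and> y \<in> nonempty_words Alph \<and>
           restrict (deriv x) (Qs Alph L) = restrict (deriv y) (Qs Alph L)}"
    using syn_cong_iff[OF L] unfolding nonempty_words_def by blast
  then show ?thesis unfolding syntactic_complexity_def by (simp only: card_quotient_kernel)
qed

lemma foldl_in: "dfa Alph Q delta q0 F \<Longrightarrow> q \<in> Q \<Longrightarrow> w \<in> lists Alph \<Longrightarrow> foldl delta q w \<in> Q"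
proof (induction w arbitrary: q)
  case (Cons a w) then show ?case unfolding dfa_def by auto
qed simp

lemma Qs_dfa:
  assumes d: "dfa Alph Q delta q0 F" and l: "dfa_lang Alph delta q0 F = L"
  shows "Qs Alph L \<subseteq> (\<lambda>q. {v\<in>lists Alph. foldl delta q v \<in> F}) ` Q"
proof
  fix X assume "X \<in> Qs Alph L"
  then obtain u where u: "u \<in> lists Alph" and X: "X = deriv u L" unfolding Qs_def by auto
  have "X = {v\<in>lists Alph. foldl delta (foldl delta q0 u) v \<in> F}"
  proof (rule set_eqI)
    fix v
    have "v \<in> X \<longleftrightarrow> u @ v \<in> lists Alph \<and> foldl delta q0 (u @ v) \<in> F"
      unfolding X deriv_def l[symmetric] dfa_lang_def by simp
    also have "\<dots> \<longleftrightarrow> v \<in> lists Alph \<and> foldl delta (foldl delta q0 u) v \<in> F"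
      using u by simp
    finally show "v \<in> X \<longleftrightarrow> v \<in> {v\<in>lists Alph. foldl delta (foldl delta q0 u) v \<in> F}" by simp
  qed
  moreover have "foldl delta q0 u \<in> Q" using foldl_in[OF d _ u] d unfolding dfa_def by auto
  ultimately show "X \<in> (\<lambda>q. {v\<in>lists Alph. foldl delta q v \<in> F}) ` Q" by blast
qed

lemma Qs_card_le:
  assumes d: "dfa Alph Q delta q0 F" and l: "dfa_lang Alph delta q0 F = L"
  shows "finite (Qs Alph L)" "card (Qs Alph L) \<le> card Q"
proof -
  have f: "finite Q" using d unfolding dfa_def by auto
  show "finite (Qs Alph L)" using Qs_dfa[OF d l] f finite_surj by blast
  show "card (Qs Alph L) \<le> card Q" using Qs_dfa[OF d l] f
    by (meson card_image_le card_mono finite_imageI order_trans)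
qed

lemma rank_bij:
  fixes k :: "'b \<Rightarrow> nat"
  assumes A: "finite A" and inj: "inj_on k A"
  defines "r \<equiv> \<lambda>x. card {y\<in>A. k y < k x}"
  shows "bij_betw r A {0..<card A}" and "\<And>x y. x\<in>A \<Longrightarrow> y\<in>A \<Longrightarrow> k y < k x \<Longrightarrow> r y < r x"
proof -
  show mono: "\<And>x y. x\<in>A \<Longrightarrow> y\<in>A \<Longrightarrow> k y < k x \<Longrightarrow> r y < r x"
  proof -
    fix x y assume x: "x\<in>A" and y: "y\<in>A" and lt: "k y < k x"
    have "{z\<in>A. k z < k y} \<subset> {z\<in>A. k z < k x}" using y lt by auto
    then show "r y < r x" unfolding r_def using A by (simp add: psubset_card_mono)
  qed
  have injr: "inj_on r A"
  proof (rule inj_onI)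
    fix x y assume x: "x\<in>A" and y: "y\<in>A" and e: "r x = r y"
    show "x = y"
    proof (rule ccontr)
      assume "x \<noteq> y"
      then have "k x \<noteq> k y" using inj x y by (auto dest: inj_onD)
      then show False using mono[OF x y] mono[OF y x] e by linarith
    qed
  qed
  have sub: "r ` A \<subseteq> {0..<card A}"
  proof
    fix z assume "z \<in> r ` A"
    then obtain x where x: "x \<in> A" "z = r x" by auto
    have "{y\<in>A. k y < k x} \<subset> A" using x by auto
    then show "z \<in> {0..<card A}" using x A unfolding r_def by (simp add: psubset_card_mono)
  qed
  have "card (r ` A) = card {0..<card A}" using injr by (simp add: card_image)
  then have "r ` A = {0..<card A}" using sub by (simp add: card_subset_eq)
  then show "bij_betw r A {0..<card A}" using injr by (simp add: bij_betw_def)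
qed



lemma deriv_finite: "finite X \<Longrightarrow> finite (deriv w X)"
  unfolding deriv_def
  using finite_vimageI[of X "\<lambda>v. w @ v"] by (simp add: vimage_def inj_on_def)

definition hgt :: "'a list set \<Rightarrow> nat" where
  "hgt X = (if X = {} then 0 else Suc (Max (length ` X)))"

lemma hgt_decr:
  assumes X: "finite X" "X \<noteq> {}" and w: "w \<noteq> []"
  shows "hgt (deriv w X) < hgt X"
proof (cases "deriv w X = {}")
  case True then show ?thesis using X by (simp add: hgt_def)
next
  case False
  have f: "finite (deriv w X)" using deriv_finite[OF X(1)] .
  have "Max (length ` deriv w X) \<in> length ` deriv w X" using Max_in f False by auto
  then obtain v where v: "v \<in> deriv w X" "length v = Max (length ` deriv w X)" by auto
  have "w @ v \<in> X" using v(1) by (simp add: deriv_def)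
  then have "length (w @ v) \<le> Max (length ` X)" using X(1) by (intro Max_ge) (auto intro: image_eqI[where x="w @ v"])
  then have "Max (length ` deriv w X) < Max (length ` X)" using v(2) w by (cases w) auto
  then show ?thesis using False X by (simp add: hgt_def)
qed

lemma part1_finite:
  assumes Af: "finite Alph" and Ane: "Alph \<noteq> {}" and L: "L \<subseteq> lists Alph" and Lf: "finite L"
    and d: "dfa Alph Q delta q0 F" and l: "dfa_lang Alph delta q0 F = L" and cQ: "card Q = n"
    and n3: "n \<ge> 3" and sc: "syntactic_complexity Alph L = fact (n - 1)"
  shows "card Alph \<ge> fact (n - 1) - fact (n - 2)"
proof -
  define QS where "QS = Qs Alph L"
  define K where "K = card QS"
  have QSf: "finite QS" and Kn: "K \<le> n" using Qs_card_le[OF d l] cQ unfolding QS_def K_def by auto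
  have QS_deriv: "\<And>X w. X \<in> QS \<Longrightarrow> w \<in> lists Alph \<Longrightarrow> deriv w X \<in> QS"
    unfolding QS_def by (rule deriv_Qs)
  have QS_fin: "\<And>X. X \<in> QS \<Longrightarrow> finite X"
    unfolding QS_def Qs_def using deriv_finite[OF Lf] by auto
  obtain a0 where a0: "a0 \<in> Alph" using Ane by auto
  obtain m where m: "\<forall>k\<in>length ` L. k < m" using Lf finite_nat_set_iff_bounded by blast
  have "deriv (replicate m a0) L = {}"
  proof (rule ccontr)
    assume "deriv (replicate m a0) L \<noteq> {}"
    then obtain v where "replicate m a0 @ v \<in> L" unfolding deriv_def by auto
    then have "length (replicate m a0 @ v) < m" using m by auto
    then show False by simp
  qed
  moreover have "replicate m a0 \<in> lists Alph" using a0 by auto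
  ultimately have emp: "{} \<in> QS" unfolding QS_def Qs_def by (metis image_eqI)
  have K1: "K \<ge> 1" using emp QSf unfolding K_def by (metis One_nat_def Suc_leI card_gt_0_iff empty_iff)
  obtain e :: "'a list set \<Rightarrow> nat" and N where eN: "e ` QS = {i. i < N}" "inj_on e QS"
    using finite_imp_inj_to_nat_seg[OF QSf] by blast
  have eb: "\<And>X. X \<in> QS \<Longrightarrow> e X < N" using eN(1) by auto
  define key where "key X = hgt X * N + e X" for X
  have key_inj: "inj_on key QS"
  proof (rule inj_onI)
    fix X Y assume X: "X \<in> QS" and Y: "Y \<in> QS" and k: "key X = key Y"
    have "key X mod N = e X" "key Y mod N = e Y" using eb X Y unfolding key_def by auto
    then have "e X = e Y" using k by simp
    then show "X = Y" using eN(2) X Y by (auto dest: inj_onD)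
  qed
  have key_mono: "\<And>X Y. X \<in> QS \<Longrightarrow> Y \<in> QS \<Longrightarrow> hgt Y < hgt X \<Longrightarrow> key Y < key X"
  proof -
    fix X Y assume X: "X \<in> QS" and Y: "Y \<in> QS" and h: "hgt Y < hgt X"
    have "key Y < hgt Y * N + N" using eb[OF Y] unfolding key_def by simp
    also have "\<dots> = Suc (hgt Y) * N" by simp
    also have "\<dots> \<le> hgt X * N" using h by (intro mult_le_mono1) simp
    also have "\<dots> \<le> key X" unfolding key_def by simp
    finally show "key Y < key X" .
  qed
  define phi where "phi X = card {Y\<in>QS. key Y < key X}" for X
  have phi_bij: "bij_betw phi QS {0..<K}"
    using rank_bij(1)[OF QSf key_inj] unfolding phi_def K_def .
  have phi_mono: "\<And>X Y. X \<in> QS \<Longrightarrow> Y \<in> QS \<Longrightarrow> hgt Y < hgt X \<Longrightarrow> phi Y < phi X"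
    using rank_bij(2)[OF QSf key_inj] key_mono unfolding phi_def by blast
  have phi_emp: "phi {} = 0"
  proof -
    have E: "{Y\<in>QS. key Y < key {}} = {}"
    proof (rule ccontr)
      assume "{Y\<in>QS. key Y < key {}} \<noteq> {}"
      then obtain Y where Y: "Y \<in> QS" "key Y < key {}" by auto
      have "Y \<noteq> {}" using Y by auto
      then have "hgt {} < hgt Y" by (simp add: hgt_def)
      then have "key {} < key Y" using key_mono Y emp by blast
      then show False using Y by simp
    qed
    show ?thesis unfolding phi_def E by simp
  qed
  define psi where "psi = inv_into QS phi"
  have psi_in: "\<And>i. i < K \<Longrightarrow> psi i \<in> QS" and phi_psi: "\<And>i. i < K \<Longrightarrow> phi (psi i) = i"
    using phi_bij unfolding psi_def bij_betw_def
    by (auto intro: inv_into_into f_inv_into_f)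
  have psi_phi: "\<And>X. X \<in> QS \<Longrightarrow> psi (phi X) = X"
    using phi_bij unfolding psi_def bij_betw_def by (simp add: inv_into_f_f)
  have phi_lt: "\<And>X. X \<in> QS \<Longrightarrow> phi X < K"
    using phi_bij unfolding bij_betw_def by auto
  have psi0: "psi 0 = {}" using psi_phi[OF emp] phi_emp by simp
  define tau where "tau w = restrict (\<lambda>i. phi (deriv w (psi i))) {0..<K}" for w
  have tau_T: "\<And>w. w \<in> lists Alph \<Longrightarrow> w \<noteq> [] \<Longrightarrow> tau w \<in> Tn K"
  proof -
    fix w :: "'a list" assume w: "w \<in> lists Alph" "w \<noteq> []"
    show "tau w \<in> Tn K" unfolding tau_def
    proof (rule TnI)
      fix i assume i: "i < K"
      have Xi: "psi i \<in> QS" using psi_in[OF i] .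
      have a: "phi (deriv w (psi i)) < K" using phi_lt QS_deriv Xi w by blast
      have b: "i = 0 \<longrightarrow> phi (deriv w (psi i)) = 0" using psi0 phi_emp by simp
      have c: "i \<noteq> 0 \<longrightarrow> phi (deriv w (psi i)) < i"
      proof
        assume "i \<noteq> 0"
        then have ne: "psi i \<noteq> {}" using phi_psi[OF i] phi_emp by auto
        have "hgt (deriv w (psi i)) < hgt (psi i)" using hgt_decr[OF QS_fin[OF Xi] ne w(2)] .
        then have "phi (deriv w (psi i)) < phi (psi i)"
          using phi_mono Xi QS_deriv[OF Xi w(1)] by blast
        then show "phi (deriv w (psi i)) < i" using phi_psi[OF i] by simp
      qed
      show "phi (deriv w (psi i)) < K \<and> (i = 0 \<longrightarrow> phi (deriv w (psi i)) = 0) \<and>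
            (i \<noteq> 0 \<longrightarrow> phi (deriv w (psi i)) < i)" using a b c by blast
    qed
  qed
  have tau_comp: "\<And>a x. a \<in> Alph \<Longrightarrow> x \<in> lists Alph \<Longrightarrow>
       tau (a # x) = compose {0..<K} (tau x) (tau [a])"
  proof -
    fix a x assume a: "a \<in> Alph" and x: "x \<in> lists Alph"
    show "tau (a # x) = compose {0..<K} (tau x) (tau [a])"
    proof (rule ext)
      fix i show "tau (a # x) i = compose {0..<K} (tau x) (tau [a]) i"
      proof (cases "i < K")
        case True
        have Y: "deriv [a] (psi i) \<in> QS" using QS_deriv psi_in[OF True] a by simp
        have "compose {0..<K} (tau x) (tau [a]) i = tau x (tau [a] i)"
          using True by (simp add: compose_eq)
        also have "\<dots> = phi (deriv x (psi (phi (deriv [a] (psi i)))))"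
          using True phi_lt[OF Y] unfolding tau_def by simp
        also have "\<dots> = phi (deriv x (deriv [a] (psi i)))" using psi_phi[OF Y] by simp
        also have "\<dots> = tau (a # x) i" using True unfolding tau_def
          using deriv_append[of "[a]" x] by simp
        finally show ?thesis by simp
      next
        case False then show ?thesis unfolding tau_def compose_def by simp
      qed
    qed
  qed
  define NE where "NE = nonempty_words Alph"
  have sc2: "syntactic_complexity Alph L = card (tau ` NE)"
  proof -
    have "syntactic_complexity Alph L = card ((\<lambda>w. restrict (deriv w) QS) ` NE)"
      using syntactic_complexity_eq[OF L] unfolding QS_def NE_def .
    also have "\<dots> = card (tau ` NE)"
    proof (rule card_image_kernel)
      fix x y assume x: "x \<in> NE" and y: "y \<in> NE"
      show "restrict (deriv x) QS = restrict (deriv y) QS \<longleftrightarrow> tau x = tau y"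
      proof
        assume h: "restrict (deriv x) QS = restrict (deriv y) QS"
        show "tau x = tau y" unfolding tau_def
        proof (rule restrict_ext)
          fix i assume "i \<in> {0..<K}"
          then have "psi i \<in> QS" using psi_in by simp
          then show "phi (deriv x (psi i)) = phi (deriv y (psi i))"
            using fun_cong[OF h, of "psi i"] by simp
        qed
      next
        assume h: "tau x = tau y"
        show "restrict (deriv x) QS = restrict (deriv y) QS"
        proof (rule restrict_ext)
          fix X assume X: "X \<in> QS"
          have "tau x (phi X) = tau y (phi X)" using h by simp
          then have "phi (deriv x X) = phi (deriv y X)"
            using phi_lt[OF X] psi_phi[OF X] unfolding tau_def by simp
          moreover have "deriv x X \<in> QS" "deriv y X \<in> QS"
            using QS_deriv X x y unfolding NE_def nonempty_words_def by auto
          ultimately show "deriv x X = deriv y X"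
            using phi_bij unfolding bij_betw_def by (auto dest: inj_onD)
        qed
      qed
    qed
    finally show ?thesis .
  qed
  have tauNE: "tau ` NE \<subseteq> Tn K" using tau_T unfolding NE_def nonempty_words_def by auto
  have le: "fact (n - 1) \<le> (fact (K - 1) :: nat)"
    using sc sc2 card_mono[OF finite_Tn tauNE] card_Tn[of K] by simp
  have Keq: "K = n"
  proof (rule ccontr)
    assume "K \<noteq> n"
    then have Kl: "K < n" using Kn by simp
    have "fact (K - 1) < (fact (n - 1) :: nat)"
    proof (cases "K - 1 = 0")
      case True
      have "fact 1 < (fact (n - 1) :: nat)" using n3 by (intro fact_less_mono_nat) auto
      then show ?thesis using True by simp
    next
      case False
      then show ?thesis using Kl by (intro fact_less_mono_nat) auto
    qed
    then show False using le by simp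
  qed
  have Sfull: "tau ` NE = Tn n"
  proof (rule card_subset_eq[OF finite_Tn])
    show "tau ` NE \<subseteq> Tn n" using tauNE Keq by simp
    show "card (tau ` NE) = card (Tn n)" using sc sc2 card_Tn by simp
  qed
  have sub: "Tn n - Dn n \<subseteq> (\<lambda>a. tau [a]) ` Alph"
  proof
    fix t assume t: "t \<in> Tn n - Dn n"
    then obtain w where w: "w \<in> NE" "t = tau w" using Sfull by auto
    then obtain a x where ax: "w = a # x" unfolding NE_def nonempty_words_def by (cases w) auto
    have a: "a \<in> Alph" and x: "x \<in> lists Alph" using w(1) ax unfolding NE_def nonempty_words_def by auto
    show "t \<in> (\<lambda>a. tau [a]) ` Alph"
    proof (cases "x = []")
      case True then show ?thesis using w ax a by auto
    next
      case False
      have "t = compose {0..<n} (tau x) (tau [a])" using tau_comp[OF a x] w ax Keq by simp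
      moreover have "tau x \<in> Tn n" "tau [a] \<in> Tn n" using tau_T x a False Keq by auto
      ultimately have "t \<in> Dn n" using compose_Dn by simp
      then show ?thesis using t by simp
    qed
  qed
  have "fact (n - 1) - fact (n - 2) = card (Tn n - Dn n)"
    using card_Diff_subset[OF finite_subset[OF Dn_sub finite_Tn] Dn_sub] card_Tn card_Dn by simp
  also have "\<dots> \<le> card ((\<lambda>a. tau [a]) ` Alph)" using sub Af by (intro card_mono) auto
  also have "\<dots> \<le> card Alph" by (rule card_image_le[OF Af])
  finally show ?thesis .
qed



locale constr =
  fixes n :: nat and g :: "nat \<Rightarrow> nat \<Rightarrow> nat"
  assumes n3: "n \<ge> 3" and gb: "bij_betw g {0..<card (Tn n - Dn n)} (Tn n - Dn n)"
begin

definition Alph :: "nat set" where "Alph = {0..<card (Tn n - Dn n)}"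
definition delta :: "nat \<Rightarrow> nat \<Rightarrow> nat" where "delta q a = g a q"
definition LF :: "nat \<Rightarrow> nat list set" where "LF q = {w \<in> lists Alph. foldl delta q w \<in> {1}}"
definition L :: "nat list set" where "L = dfa_lang Alph delta (n - 1) {1}"
definition tau :: "nat list \<Rightarrow> nat \<Rightarrow> nat" where "tau w = restrict (\<lambda>q. foldl delta q w) {0..<n}"
definition S where "S = tau ` nonempty_words Alph"

lemma g_in: "a \<in> Alph \<Longrightarrow> g a \<in> Tn n \<and> g a \<notin> Dn n"
  using gb unfolding bij_betw_def Alph_def by auto

lemma fold_props:
  "w \<in> lists Alph \<Longrightarrow> q < n \<Longrightarrow> foldl delta q w < n \<and> (q = 0 \<longrightarrow> foldl delta q w = 0) \<and> (w \<noteq> [] \<and> q \<noteq> 0 \<longrightarrow> foldl delta q w < q)"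
proof (induction w arbitrary: q)
  case Nil then show ?case by simp
next
  case (Cons a w)
  have a: "a \<in> Alph" and w: "w \<in> lists Alph" using Cons.prems by auto
  have ga: "g a \<in> Tn n" using g_in[OF a] by simp
  have d: "delta q a < n" "q = 0 \<longrightarrow> delta q a = 0" "q \<noteq> 0 \<longrightarrow> delta q a < q"
    using TnD[OF ga Cons.prems(2)] unfolding delta_def by auto
  have IH: "foldl delta (delta q a) w < n \<and> (delta q a = 0 \<longrightarrow> foldl delta (delta q a) w = 0) \<and>
      (w \<noteq> [] \<and> delta q a \<noteq> 0 \<longrightarrow> foldl delta (delta q a) w < delta q a)"
    using Cons.IH[OF w d(1)] .
  show ?case
  proof (cases "delta q a = 0")
    case True then show ?thesis using IH d by (cases "q = 0") simp_all
  next
    case False then show ?thesis using IH d by auto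
  qed
qed

lemma tau_T: "w \<in> lists Alph \<Longrightarrow> w \<noteq> [] \<Longrightarrow> tau w \<in> Tn n"
  unfolding tau_def by (rule TnI) (use fold_props in auto)

lemma tau_append: "w1 \<in> lists Alph \<Longrightarrow> w2 \<in> lists Alph \<Longrightarrow>
  tau (w1 @ w2) = compose {0..<n} (tau w2) (tau w1)"
proof (rule ext)
  fix i assume w1: "w1 \<in> lists Alph" and w2: "w2 \<in> lists Alph"
  show "tau (w1 @ w2) i = compose {0..<n} (tau w2) (tau w1) i"
  proof (cases "i < n")
    case True
    then have "foldl delta i w1 < n" using fold_props w1 by blast
    then show ?thesis using True unfolding tau_def by (simp add: compose_eq)
  next
    case False then show ?thesis unfolding tau_def compose_def by simp
  qed
qed

lemma tau_single: "a \<in> Alph \<Longrightarrow> tau [a] = g a"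
proof -
  assume a: "a \<in> Alph"
  have "g a \<in> Tn n" using g_in[OF a] by simp
  then have "restrict (g a) {0..<n} = g a" unfolding Tn_def by (rule PiE_restrict)
  then show ?thesis unfolding tau_def delta_def by (simp add: restrict_def)
qed

lemma S_comp: "t1 \<in> S \<Longrightarrow> t2 \<in> S \<Longrightarrow> compose {0..<n} t2 t1 \<in> S"
proof -
  assume "t1 \<in> S" "t2 \<in> S"
  then obtain w1 w2 where w: "w1 \<in> nonempty_words Alph" "w2 \<in> nonempty_words Alph"
    "t1 = tau w1" "t2 = tau w2" unfolding S_def by auto
  then have "compose {0..<n} t2 t1 = tau (w1 @ w2)"
    using tau_append unfolding nonempty_words_def by auto
  moreover have "w1 @ w2 \<in> nonempty_words Alph" using w unfolding nonempty_words_def by auto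
  ultimately show ?thesis unfolding S_def by auto
qed

lemma I_S: "t \<in> Tn n \<Longrightarrow> t \<notin> Dn n \<Longrightarrow> t \<in> S"
proof -
  assume "t \<in> Tn n" "t \<notin> Dn n"
  then obtain a where a: "a \<in> Alph" "t = g a"
    using gb unfolding bij_betw_def Alph_def by (metis Diff_iff imageE)
  then have "t = tau [a]" using tau_single by simp
  moreover have "[a] \<in> nonempty_words Alph" using a unfolding nonempty_words_def by auto
  ultimately show ?thesis unfolding S_def by auto
qed

lemma S_sub: "S \<subseteq> Tn n"
  unfolding S_def nonempty_words_def using tau_T by auto

lemma Tn_eq: "t \<in> Tn n \<Longrightarrow> t' \<in> Tn n \<Longrightarrow> (\<And>i. i < n \<Longrightarrow> t i = t' i) \<Longrightarrow> t = t'"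
  by (rule ext) (metis Tn_arb)

lemma gen: "\<forall>t\<in>Tn n. (\<forall>i. k \<le> i \<and> i < n \<longrightarrow> t i = 0) \<longrightarrow> t \<in> S"
proof (induction k)
  case 0
  show ?case
  proof (intro ballI impI)
    fix t assume t: "t \<in> Tn n" and z: "\<forall>i. 0 \<le> i \<and> i < n \<longrightarrow> t i = 0"
    define u where "u = restrict (\<lambda>i. if i \<le> 1 then 0 else (1::nat)) {0..<n}"
    have uT: "u \<in> Tn n" unfolding u_def by (rule TnI) (use n3 in auto)
    have "u \<notin> Dn n"
    proof
      assume "u \<in> Dn n"
      then have "u 2 < 2 - 1" using DnD[of u n 2] n3 by auto
      then show False unfolding u_def using n3 by simp
    qed
    then have uS: "u \<in> S" using I_S uT by simp
    have cT: "compose {0..<n} u u \<in> Tn n" using compose_Dn[OF uT uT] Dn_sub by auto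
    have "compose {0..<n} u u = t"
    proof (rule Tn_eq[OF cT t])
      fix i assume i: "i < n"
      show "compose {0..<n} u u i = t i" using i z n3 unfolding u_def by (simp add: compose_eq)
    qed
    then show "t \<in> S" using S_comp[OF uS uS] by simp
  qed
next
  case (Suc k)
  show ?case
  proof (intro ballI impI)
    fix t assume t: "t \<in> Tn n" and z: "\<forall>i. Suc k \<le> i \<and> i < n \<longrightarrow> t i = 0"
    show "t \<in> S"
    proof (cases "t \<in> Dn n")
      case False then show ?thesis using I_S t by simp
    next
      case True
      define v where "v = restrict (\<lambda>j. if j + 1 < n then t (j + 1) else 0) {0..<n}"
      define s where "s = restrict (\<lambda>i. i - 1) {0..<n}"
      have t1: "t 1 = 0" using DnD0[OF True, of 1] n3 by simp
      have vT: "v \<in> Tn n" unfolding v_def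
      proof (rule TnI)
        fix j assume j: "j < n"
        show "(if j + 1 < n then t (j + 1) else 0) < n \<and>
          (j = 0 \<longrightarrow> (if j + 1 < n then t (j + 1) else 0) = 0) \<and>
          (j \<noteq> 0 \<longrightarrow> (if j + 1 < n then t (j + 1) else 0) < j)"
        proof (cases "j + 1 < n")
          case True
          have a: "t (j+1) < n" using TnD[OF t True] by simp
          have b: "j \<noteq> 0 \<longrightarrow> t (j + 1) < j" using DnD[OF \<open>t \<in> Dn n\<close> True] by auto
          show ?thesis using True a b t1 by auto
        qed (use j in auto)
      qed
      have vz: "\<forall>i. k \<le> i \<and> i < n \<longrightarrow> v i = 0" using z unfolding v_def by auto
      have vS: "v \<in> S" using Suc.IH vT vz by blast
      have sT: "s \<in> Tn n" unfolding s_def by (rule TnI) auto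
      have "s \<notin> Dn n"
      proof
        assume "s \<in> Dn n"
        then have "s 2 < 2 - 1" using DnD[of s n 2] n3 by auto
        then show False unfolding s_def using n3 by simp
      qed
      then have sS: "s \<in> S" using I_S sT by simp
      have cT: "compose {0..<n} v s \<in> Tn n" using compose_Dn[OF sT vT] Dn_sub by auto
      have "compose {0..<n} v s = t"
      proof (rule Tn_eq[OF cT t])
        fix i assume i: "i < n"
        show "compose {0..<n} v s i = t i"
        proof (cases "i = 0")
          case True
          have "t 0 = 0" using TnD[OF t, of 0] i by simp
          then show ?thesis using True i t1 n3 unfolding v_def s_def by (simp add: compose_eq)
        next
          case False
          have "i - 1 < n" "i - 1 + 1 = i" using i False by auto
          then show ?thesis using i unfolding v_def s_def by (simp add: compose_eq)
        qed
      qed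
      then show "t \<in> S" using S_comp[OF sS vS] by simp
    qed
  qed
qed

lemma S_eq: "S = Tn n"
  using S_sub gen[of n] by auto

lemma S_ex: "t \<in> Tn n \<Longrightarrow> \<exists>w. w \<in> lists Alph \<and> w \<noteq> [] \<and> (\<forall>q<n. foldl delta q w = t q)"
proof -
  assume "t \<in> Tn n"
  then obtain w where "w \<in> nonempty_words Alph" "t = tau w" using S_eq unfolding S_def by auto
  then show ?thesis unfolding nonempty_words_def tau_def by auto
qed


lemma dfa_ok: "dfa Alph {0..<n} delta (n - 1) {1}"
  unfolding dfa_def delta_def using n3 g_in TnD by auto

lemma L_LF: "L = LF (n - 1)"
  unfolding L_def LF_def dfa_lang_def by simp

lemma L_sub: "L \<subseteq> lists Alph"
  unfolding L_def dfa_lang_def by auto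

lemma deriv_LF: "u \<in> lists Alph \<Longrightarrow> deriv u (LF q) = LF (foldl delta q u)"
  unfolding deriv_def LF_def by auto

lemma LF0: "LF 0 = {}"
proof -
  have "\<And>w. w \<in> lists Alph \<Longrightarrow> foldl delta 0 w = 0"
  proof -
    fix w assume "w \<in> lists Alph"
    then show "foldl delta 0 w = 0" using fold_props[of w 0] n3 by simp
  qed
  then show ?thesis unfolding LF_def by auto
qed

lemma LF_ne_aux: "q < p \<Longrightarrow> p < n \<Longrightarrow> LF p \<noteq> LF q"
proof -
  assume qp: "q < p" and pn: "p < n"
  show "LF p \<noteq> LF q"
  proof (cases "p = 1")
    case True
    then have "q = 0" using qp by simp
    moreover have "[] \<in> LF p" using True unfolding LF_def by simp
    ultimately show ?thesis using LF0 by auto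
  next
    case False
    define t where "t = restrict (\<lambda>i. if i = p then 1 else (0::nat)) {0..<n}"
    have "t \<in> Tn n" unfolding t_def by (rule TnI) (use qp pn False in auto)
    then obtain w where w: "w \<in> lists Alph" "\<forall>q<n. foldl delta q w = t q" using S_ex by blast
    have "foldl delta p w = 1" "foldl delta q w = 0" using w(2) pn qp unfolding t_def by auto
    then have "w \<in> LF p" "w \<notin> LF q" using w(1) unfolding LF_def by auto
    then show ?thesis by auto
  qed
qed

lemma LF_inj: "inj_on LF {0..<n}"
proof (rule inj_onI)
  fix p q assume "p \<in> {0..<n}" "q \<in> {0..<n}" "LF p = LF q"
  then show "p = q" using LF_ne_aux by (metis atLeastLessThan_iff linorder_neq_iff)
qed

lemma reach: "q < n \<Longrightarrow> \<exists>u\<in>lists Alph. foldl delta (n - 1) u = q"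
proof -
  assume q: "q < n"
  show ?thesis
  proof (cases "q = n - 1")
    case True then show ?thesis by (intro bexI[of _ "[]"]) auto
  next
    case False
    define t where "t = restrict (\<lambda>i. if i = n - 1 then q else (0::nat)) {0..<n}"
    have "t \<in> Tn n" unfolding t_def by (rule TnI) (use q False n3 in auto)
    then obtain w where w: "w \<in> lists Alph" "\<forall>q<n. foldl delta q w = t q" using S_ex by blast
    have "foldl delta (n - 1) w = q" using w(2) n3 unfolding t_def by auto
    then show ?thesis using w(1) by auto
  qed
qed

lemma Qs_eq: "Qs Alph L = LF ` {0..<n}"
proof
  show "Qs Alph L \<subseteq> LF ` {0..<n}"
  proof
    fix X assume "X \<in> Qs Alph L"
    then obtain u where u: "u \<in> lists Alph" "X = deriv u L" unfolding Qs_def by auto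
    then have "X = LF (foldl delta (n - 1) u)" using deriv_LF L_LF by simp
    moreover have "foldl delta (n - 1) u < n" using fold_props[OF u(1), of "n - 1"] n3 by simp
    ultimately show "X \<in> LF ` {0..<n}" by auto
  qed
next
  show "LF ` {0..<n} \<subseteq> Qs Alph L"
  proof
    fix X assume "X \<in> LF ` {0..<n}"
    then obtain q where q: "q < n" "X = LF q" by auto
    obtain u where u: "u \<in> lists Alph" "foldl delta (n - 1) u = q" using reach[OF q(1)] by blast
    have "X = deriv u L" using u q deriv_LF L_LF by simp
    then show "X \<in> Qs Alph L" using u unfolding Qs_def by auto
  qed
qed

lemma card_Qs: "card (Qs Alph L) = n"
  using Qs_eq LF_inj by (simp add: card_image)

lemma sc_L: "state_complexity Alph L = n"
  unfolding state_complexity_def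
proof (rule Least_equality)
  show "\<exists>Q delta' q0 F. dfa Alph Q delta' q0 F \<and> card Q = n \<and> dfa_lang Alph delta' q0 F = L"
    using dfa_ok L_def by fastforce
next
  fix m assume "\<exists>Q delta' q0 F. dfa Alph Q delta' q0 F \<and> card Q = m \<and> dfa_lang Alph delta' q0 F = L"
  then obtain Q delta' q0 F where "dfa Alph Q delta' q0 F" "card Q = m" "dfa_lang Alph delta' q0 F = L"
    by blast
  then show "n \<le> m" using Qs_card_le(2) card_Qs by metis
qed

lemma syn_L: "syntactic_complexity Alph L = fact (n - 1)"
proof -
  have "syntactic_complexity Alph L = card ((\<lambda>w. restrict (deriv w) (Qs Alph L)) ` nonempty_words Alph)"
    using syntactic_complexity_eq[OF L_sub] .
  also have "\<dots> = card (tau ` nonempty_words Alph)"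
  proof (rule card_image_kernel)
    fix x y assume x: "x \<in> nonempty_words Alph" and y: "y \<in> nonempty_words Alph"
    have xl: "x \<in> lists Alph" and yl: "y \<in> lists Alph" using x y unfolding nonempty_words_def by auto
    show "restrict (deriv x) (Qs Alph L) = restrict (deriv y) (Qs Alph L) \<longleftrightarrow> tau x = tau y"
    proof
      assume h: "restrict (deriv x) (Qs Alph L) = restrict (deriv y) (Qs Alph L)"
      show "tau x = tau y" unfolding tau_def
      proof (rule restrict_ext)
        fix q assume q: "q \<in> {0..<n}"
        then have "LF q \<in> Qs Alph L" using Qs_eq by auto
        then have "deriv x (LF q) = deriv y (LF q)" using fun_cong[OF h, of "LF q"] by simp
        then have "LF (foldl delta q x) = LF (foldl delta q y)" using deriv_LF xl yl by simp
        moreover have "foldl delta q x < n" "foldl delta q y < n" using fold_props xl yl q by auto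
        ultimately show "foldl delta q x = foldl delta q y" using LF_inj by (auto dest: inj_onD)
      qed
    next
      assume h: "tau x = tau y"
      show "restrict (deriv x) (Qs Alph L) = restrict (deriv y) (Qs Alph L)"
      proof (rule restrict_ext)
        fix X assume "X \<in> Qs Alph L"
        then obtain q where q: "q < n" "X = LF q" using Qs_eq by auto
        have "foldl delta q x = foldl delta q y" using fun_cong[OF h, of q] q unfolding tau_def by simp
        then show "deriv x X = deriv y X" using q deriv_LF xl yl by simp
      qed
    qed
  qed
  also have "\<dots> = fact (n - 1)" using S_eq card_Tn unfolding S_def by simp
  finally show ?thesis .
qed

lemma fold_zero: "w \<in> lists Alph \<Longrightarrow> q < n \<Longrightarrow> q \<le> length w \<Longrightarrow> foldl delta q w = 0"
proof (induction w arbitrary: q)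
  case Nil then show ?case by simp
next
  case (Cons a w)
  have a: "a \<in> Alph" and w: "w \<in> lists Alph" using Cons.prems by auto
  show ?case
  proof (cases "q = 0")
    case True then show ?thesis using fold_props[OF Cons.prems(1)] Cons.prems(2) by simp
  next
    case False
    have d: "delta q a < q" using fold_props[of "[a]" q] a Cons.prems(2) False by simp
    then have "foldl delta (delta q a) w = 0" using Cons.IH[OF w] Cons.prems(2,3) by simp
    then show ?thesis by simp
  qed
qed

lemma fin_L: "finite L"
proof -
  have "L \<subseteq> {xs. set xs \<subseteq> Alph \<and> length xs \<le> n}"
  proof
    fix w assume w: "w \<in> L"
    then have wl: "w \<in> lists Alph" and f: "foldl delta (n - 1) w = 1" unfolding L_def dfa_lang_def by auto
    have "length w \<le> n"
    proof (rule ccontr)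
      assume "\<not> length w \<le> n"
      then have "foldl delta (n - 1) w = 0" using fold_zero[OF wl, of "n - 1"] n3 by simp
      then show False using f by simp
    qed
    then show "w \<in> {xs. set xs \<subseteq> Alph \<and> length xs \<le> n}" using wl by auto
  qed
  moreover have "finite {xs. set xs \<subseteq> Alph \<and> length xs \<le> n}"
    by (rule finite_lists_length_le) (simp add: Alph_def)
  ultimately show ?thesis by (rule finite_subset)
qed

end



lemma sc_compl:
  assumes L: "L \<subseteq> lists Alph"
  shows "syntactic_complexity Alph (lists Alph - L) = syntactic_complexity Alph L"
proof -
  have "\<And>x y. x \<in> nonempty_words Alph \<Longrightarrow> y \<in> nonempty_words Alph \<Longrightarrow>
      syn_cong Alph (lists Alph - L) x y \<longleftrightarrow> syn_cong Alph L x y"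
    unfolding syn_cong_def nonempty_words_def by auto
  then have "{(x, y). x \<in> nonempty_words Alph \<and> y \<in> nonempty_words Alph \<and> syn_cong Alph (lists Alph - L) x y}
     = {(x, y). x \<in> nonempty_words Alph \<and> y \<in> nonempty_words Alph \<and> syn_cong Alph L x y}" by blast
  then show ?thesis unfolding syntactic_complexity_def by simp
qed

lemma dfa_compl:
  assumes d: "dfa Alph Q delta q0 F"
  shows "dfa Alph Q delta q0 (Q - F)" "dfa_lang Alph delta q0 (Q - F) = lists Alph - dfa_lang Alph delta q0 F"
proof -
  show "dfa Alph Q delta q0 (Q - F)" using d unfolding dfa_def by auto
  have "\<And>w. w \<in> lists Alph \<Longrightarrow> foldl delta q0 w \<in> Q" using foldl_in[OF d] d unfolding dfa_def by auto
  then show "dfa_lang Alph delta q0 (Q - F) = lists Alph - dfa_lang Alph delta q0 F"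
    unfolding dfa_lang_def by auto
qed

lemma part1:
  assumes Af: "finite Alph" and Ane: "Alph \<noteq> {}" and L: "L \<subseteq> lists Alph" and n3: "n \<ge> 3"
    and foc: "finite_or_cofinite Alph L" and reg: "regular Alph L"
    and scn: "state_complexity Alph L = n" and sc: "syntactic_complexity Alph L = fact (n - 1)"
  shows "card Alph \<ge> fact (n - 1) - fact (n - 2)"
proof -
  let ?P = "\<lambda>m. \<exists>Q delta q0 F. dfa Alph Q delta q0 F \<and> card Q = m \<and> dfa_lang Alph delta q0 F = L"
  obtain Q0 d0 q00 F0 where "dfa Alph Q0 d0 q00 F0" "dfa_lang Alph d0 q00 F0 = L"
    using reg unfolding regular_def by blast
  then have "?P (card Q0)" by blast
  then have "?P (LEAST m. ?P m)" by (rule LeastI)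
  then obtain Q delta q0 F where d: "dfa Alph Q delta q0 F" and cQ: "card Q = n"
    and l: "dfa_lang Alph delta q0 F = L"
    using scn unfolding state_complexity_def by blast
  show ?thesis
  proof (cases "finite L")
    case True then show ?thesis using part1_finite[OF Af Ane L True d l cQ n3 sc] by simp
  next
    case False
    then have f: "finite (lists Alph - L)" using foc unfolding finite_or_cofinite_def by simp
    have l': "dfa_lang Alph delta q0 (Q - F) = lists Alph - L" using dfa_compl[OF d] l by simp
    show ?thesis
      using part1_finite[OF Af Ane _ f dfa_compl(1)[OF d] l' cQ n3] sc sc_compl[OF L] by simp
  qed
qed

lemma part2:
  assumes n3: "(n::nat) \<ge> 3"
  shows "\<exists>(Alph :: nat set) L. finite Alph \<and> card Alph = fact (n - 1) - fact (n - 2) \<and>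
               L \<subseteq> lists Alph \<and> finite_or_cofinite Alph L \<and>
               state_complexity Alph L = n \<and> syntactic_complexity Alph L = fact (n - 1)"
proof -
  have fI: "finite (Tn n - Dn n)" using finite_Tn by simp
  obtain g where g: "bij_betw g {0..<card (Tn n - Dn n)} (Tn n - Dn n)"
    using ex_bij_betw_nat_finite[OF fI] by blast
  interpret constr n g using n3 g by unfold_locales
  have cA: "card Alph = fact (n - 1) - fact (n - 2)"
    unfolding Alph_def
    using card_Diff_subset[OF finite_subset[OF Dn_sub finite_Tn] Dn_sub] card_Tn card_Dn by simp
  show ?thesis
    apply (rule exI[of _ Alph], rule exI[of _ L])
    using cA L_sub fin_L sc_L syn_L unfolding finite_or_cofinite_def Alph_def by simp
qed

theorem theorem2:
  shows "(\<forall>(Alph :: 'a set) L n.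
            finite Alph \<and> Alph \<noteq> {} \<and> L \<subseteq> lists Alph \<and> n \<ge> 3 \<and>
            finite_or_cofinite Alph L \<and> regular Alph L \<and>
            state_complexity Alph L = n \<and> syntactic_complexity Alph L = fact (n - 1)
            \<longrightarrow> card Alph \<ge> fact (n - 1) - fact (n - 2))
       \<and> (\<forall>n::nat. n \<ge> 3 \<longrightarrow>
            (\<exists>(Alph :: nat set) L. finite Alph \<and> card Alph = fact (n - 1) - fact (n - 2) \<and>
               L \<subseteq> lists Alph \<and> finite_or_cofinite Alph L \<and>
               state_complexity Alph L = n \<and> syntactic_complexity Alph L = fact (n - 1)))"
  using part1 part2 by blast


end
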